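(* Let $p$ be an odd prime, let $\mathcal{Y}$ be an expansion of $(\mathbb{Z}_p,+,\operatorname{Val}_p)$, and let $\mathcal{Z}$ be the structure induced on $\mathbb{Z}$ by $\mathcal{Y}$. Suppose $\mathcal{Y}$ is dp-minimal and every $\mathcal{Z}$-definable subset of $\mathbb{Z}^n$ is of the form $X\cap Y$, where $X$ is a $\mathcal{Y}$-definable subset of $\mathbb{Z}_p^n$ and $Y$ is a $(\mathbb{Z},+)$-definable subset of $\mathbb{Z}^n$. Then $\mathcal{Z}$ is dp-minimal.
   Context: "Definable" means definable with parameters. The structure induced on $\mathbb{Z}\subseteq\mathbb{Z}_p$ by $\mathcal{Y}$ has an $n$-ary relation defining $\mathbb{Z}^n\cap W$ for each $\mathcal{Y}$-definable $W\subseteq\mathbb{Z}_p^n$. $(\mathbb{Z}_p,+,\operatorname{Val}_p)$ denotes the additive group of $p$-adic integers with the relation $\operatorname{Val}_p(a)\le\operatorname{Val}_p(b)$. *)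

theory Defs
  imports "HOL-Computational_Algebra.Primes"
begin

text \<open>Formulas over relation symbols of type 'r; variables are natural numbers.
  Function symbols are represented by their graphs (relations).\<close>

datatype 'r fm =
    Eq nat nat
  | Rel 'r "nat list"
  | Neg "'r fm"
  | Conj "'r fm" "'r fm"
  | Ex nat "'r fm"

primrec sat :: "'a set \<Rightarrow> ('r \<Rightarrow> 'a list \<Rightarrow> bool) \<Rightarrow> 'r fm \<Rightarrow> (nat \<Rightarrow> 'a) \<Rightarrow> bool" where
  "sat M I (Eq i j) v = (v i = v j)"
| "sat M I (Rel r is) v = I r (map v is)"
| "sat M I (Neg \<phi>) v = (\<not> sat M I \<phi> v)"
| "sat M I (Conj \<phi> \<psi>) v = (sat M I \<phi> v \<and> sat M I \<psi> v)"
| "sat M I (Ex i \<phi>) v = (\<exists>a\<in>M. sat M I \<phi> (v(i := a)))"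

text \<open>Definable (with parameters) subsets of M^n, where M^n is represented by lists of length n.
  Variables 0..n-1 are the free variables; all other variables are parameters from M.\<close>

definition definable :: "'a set \<Rightarrow> ('r \<Rightarrow> 'a list \<Rightarrow> bool) \<Rightarrow> nat \<Rightarrow> 'a list set \<Rightarrow> bool" where
  "definable M I n W \<longleftrightarrow>
     (\<exists>\<phi> ps. (\<forall>i. ps i \<in> M) \<and>
        W = {xs. length xs = n \<and> set xs \<subseteq> M \<and>
                 sat M I \<phi> (\<lambda>i. if i < n then xs ! i else ps i)})"

definition tuples :: "'a set \<Rightarrow> nat \<Rightarrow> 'a list set" where
  "tuples M k = {xs. length xs = k \<and> set xs \<subseteq> M}"

text \<open>dp-minimality: there is no ict-pattern of depth 2 in a single variable x.
  By compactness, an ict-pattern in a monster model exists iff arbitrarily large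
  finite patterns are realised in M itself; we state this finite form.\<close>

definition dp_minimal :: "'a set \<Rightarrow> ('r \<Rightarrow> 'a list \<Rightarrow> bool) \<Rightarrow> bool" where
  "dp_minimal M I \<longleftrightarrow>
     \<not> (\<exists>k l \<Phi> \<Psi>. definable M I (Suc k) \<Phi> \<and> definable M I (Suc l) \<Psi> \<and>
          (\<forall>N::nat. \<exists>a b. (\<forall>i<N. a i \<in> tuples M k) \<and> (\<forall>j<N. b j \<in> tuples M l) \<and>
              (\<forall>i<N. \<forall>j<N. \<exists>c\<in>M.
                  (\<forall>i'<N. (c # a i' \<in> \<Phi>) \<longleftrightarrow> i' = i) \<and>
                  (\<forall>j'<N. (c # b j' \<in> \<Psi>) \<longleftrightarrow> j' = j))))"

text \<open>An element of Z_p is a coherent sequence (a_n) with a_n in {0..<p^n} and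
  a_{n+1} mod p^n = a_n.\<close>

definition Zp :: "nat \<Rightarrow> (nat \<Rightarrow> int) set" where
  "Zp p = {f. \<forall>n. f n = f (Suc n) mod (int p ^ n)}"

definition padd :: "nat \<Rightarrow> (nat \<Rightarrow> int) \<Rightarrow> (nat \<Rightarrow> int) \<Rightarrow> (nat \<Rightarrow> int)" where
  "padd p f g = (\<lambda>n. (f n + g n) mod (int p ^ n))"

text \<open>Val_p(a) \<le> Val_p(b): a \<in> p^n Z_p implies b \<in> p^n Z_p for all n.\<close>

definition pval_le :: "nat \<Rightarrow> (nat \<Rightarrow> int) \<Rightarrow> (nat \<Rightarrow> int) \<Rightarrow> bool" where
  "pval_le p f g \<longleftrightarrow> (\<forall>n. f n = 0 \<longrightarrow> g n = 0)"

definition pembed :: "nat \<Rightarrow> int \<Rightarrow> (nat \<Rightarrow> int)" where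
  "pembed p k = (\<lambda>n. k mod (int p ^ n))"

definition Zadd :: "unit \<Rightarrow> int list \<Rightarrow> bool" where
  "Zadd r xs \<longleftrightarrow> (\<exists>a b. xs = [a, b, a + b])"

text \<open>Structure induced on Z by a structure (Zp p, I): an n-ary relation symbol (n, W)
  for each I-definable W \<subseteq> Zp^n, interpreted as Z^n \<inter> W.\<close>

definition induced :: "nat \<Rightarrow> ('r \<Rightarrow> (nat \<Rightarrow> int) list \<Rightarrow> bool)
    \<Rightarrow> (nat \<times> (nat \<Rightarrow> int) list set) \<Rightarrow> int list \<Rightarrow> bool" where
  "induced p I = (\<lambda>(n, W) xs. definable (Zp p) I n W \<and> length xs = n \<and> map (pembed p) xs \<in> W)"

definition expands_Zp :: "nat \<Rightarrow> ('r \<Rightarrow> (nat \<Rightarrow> int) list \<Rightarrow> bool) \<Rightarrow> bool" where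
  "expands_Zp p I \<longleftrightarrow>
     (\<exists>rp rv. (\<forall>xs. set xs \<subseteq> Zp p \<longrightarrow> (I rp xs \<longleftrightarrow> (\<exists>a b. xs = [a, b, padd p a b]))) \<and>
             (\<forall>xs. set xs \<subseteq> Zp p \<longrightarrow> (I rv xs \<longleftrightarrow> (\<exists>a b. xs = [a, b] \<and> pval_le p a b))))"

end

theory Submission
  imports Defs
begin

definition aff :: "((nat \<Rightarrow> int) \<Rightarrow> int) \<Rightarrow> bool" where
  "aff L \<longleftrightarrow> (\<exists>V c d. finite V \<and> (\<forall>v. L v = d + (\<Sum>i\<in>V. c i * v i)))"

definition coef :: "((nat \<Rightarrow> int) \<Rightarrow> int) \<Rightarrow> nat \<Rightarrow> int" where
  "coef L y = L ((\<lambda>_. 0)(y := 1)) - L (\<lambda>_. 0)"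

lemma sum_upd:
  assumes "finite V"
  shows "(\<Sum>i\<in>V. c i * (u(y:=x)) i) = (if y \<in> V then c y * x else 0) + (\<Sum>i\<in>V-{y}. c i * u i)"
proof (cases "y \<in> V")
  case True
  have "(\<Sum>i\<in>V. c i * (u(y:=x)) i) = c y * x + (\<Sum>i\<in>V-{y}. c i * (u(y:=x)) i)"
    using sum.remove[OF assms True, of "\<lambda>i. c i * (u(y:=x)) i"] by simp
  also have "(\<Sum>i\<in>V-{y}. c i * (u(y:=x)) i) = (\<Sum>i\<in>V-{y}. c i * u i)"
    by (rule sum.cong) auto
  finally show ?thesis using True by simp
next
  case False
  then have "V - {y} = V" by auto
  moreover have "(\<Sum>i\<in>V. c i * (u(y:=x)) i) = (\<Sum>i\<in>V. c i * u i)"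
    by (rule sum.cong) (use False in auto)
  ultimately show ?thesis using False by simp
qed

lemma aff_upd:
  assumes "aff L"
  shows "L (v(y:=x)) = coef L y * x + L (v(y:=0))"
proof -
  obtain V c d where V: "finite V" and L: "\<And>v. L v = d + (\<Sum>i\<in>V. c i * v i)"
    using assms unfolding aff_def by blast
  have e: "L (u(y:=x)) = d + (if y \<in> V then c y * x else 0) + (\<Sum>i\<in>V-{y}. c i * u i)" for u x
    using L[of "u(y:=x)"] sum_upd[OF V, of c u y x] by (simp del: fun_upd_apply)
  have z: "(\<lambda>_. 0::int)(y:=0) = (\<lambda>_. 0)" by auto
  have "coef L y = (if y \<in> V then c y else 0)"
    unfolding coef_def using z using e[of "\<lambda>_. 0" 1] e[of "\<lambda>_. 0" 0]
    by (simp del: fun_upd_apply)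
  then show ?thesis using e[of v x] e[of v 0] by (simp del: fun_upd_apply)
qed

lemma aff_var: "aff (\<lambda>v. v i)"
  unfolding aff_def by (rule exI[of _ "{i}"], rule exI[of _ "\<lambda>_. 1"], rule exI[of _ 0]) simp

lemma aff_comb:
  assumes "aff L1" "aff L2"
  shows "aff (\<lambda>v. a * L1 v + b * L2 v)"
proof -
  obtain V1 c1 d1 where V1: "finite V1" and L1: "\<And>v. L1 v = d1 + (\<Sum>i\<in>V1. c1 i * v i)"
    using assms(1) unfolding aff_def by blast
  obtain V2 c2 d2 where V2: "finite V2" and L2: "\<And>v. L2 v = d2 + (\<Sum>i\<in>V2. c2 i * v i)"
    using assms(2) unfolding aff_def by blast
  define V where "V = V1 \<union> V2"
  define c where "c i = a * (if i \<in> V1 then c1 i else 0) + b * (if i \<in> V2 then c2 i else 0)" for i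
  have VV: "finite V" using V1 V2 unfolding V_def by simp
  have s1: "(\<Sum>i\<in>V. (if i \<in> V1 then c1 i * v i else 0)) = (\<Sum>i\<in>V1. c1 i * v i)" for v
  proof -
    have "V \<inter> V1 = V1" unfolding V_def by blast
    then show ?thesis using sum.inter_restrict[of V "\<lambda>i. c1 i * v i" V1] VV by simp
  qed
  have s2: "(\<Sum>i\<in>V. (if i \<in> V2 then c2 i * v i else 0)) = (\<Sum>i\<in>V2. c2 i * v i)" for v
  proof -
    have "V \<inter> V2 = V2" unfolding V_def by blast
    then show ?thesis using sum.inter_restrict[of V "\<lambda>i. c2 i * v i" V2] VV by simp
  qed
  have pw: "c i * v i = a * (if i \<in> V1 then c1 i * v i else 0) + b * (if i \<in> V2 then c2 i * v i else 0)" for i v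
    unfolding c_def by (cases "i \<in> V1"; cases "i \<in> V2") (simp_all add: algebra_simps)
  have eq: "a * L1 v + b * L2 v = (a*d1 + b*d2) + (\<Sum>i\<in>V. c i * v i)" for v
  proof -
    have "(\<Sum>i\<in>V. c i * v i) = a * (\<Sum>i\<in>V. (if i \<in> V1 then c1 i * v i else 0))
         + b * (\<Sum>i\<in>V. (if i \<in> V2 then c2 i * v i else 0))"
      by (simp only: pw sum.distrib sum_distrib_left)
    then have "(\<Sum>i\<in>V. c i * v i) = a * (\<Sum>i\<in>V1. c1 i * v i) + b * (\<Sum>i\<in>V2. c2 i * v i)"
      by (simp only: s1 s2)
    then show ?thesis by (simp only: L1 L2 distrib_left add_ac)
  qed
  show ?thesis unfolding aff_def
    by (rule exI[of _ V], rule exI[of _ c], rule exI[of _ "a*d1 + b*d2"]) (use VV eq in blast)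
qed

lemma aff_rest:
  assumes "aff L" shows "aff (\<lambda>v. L (v(y:=0)))"
proof -
  obtain V c d where V: "finite V" and L: "\<And>v. L v = d + (\<Sum>i\<in>V. c i * v i)"
    using assms unfolding aff_def by blast
  have "L (v(y:=0)) = d + (\<Sum>i\<in>V-{y}. c i * v i)" for v
    using L sum_upd[OF V, of c v y 0] by simp
  then show ?thesis unfolding aff_def using V by blast
qed

lemma aff_cong:
  assumes "aff L" "\<And>i. v i mod m = w i mod m"
  shows "L v mod m = L w mod m"
proof -
  obtain V c d where V: "finite V" and L: "\<And>v. L v = d + (\<Sum>i\<in>V. c i * v i)"
    using assms unfolding aff_def by blast
  have p: "c i * v i mod m = c i * w i mod m" for i
    by (metis assms(2) mod_mult_right_eq)
  have "(\<Sum>i\<in>V. c i * v i) mod m = (\<Sum>i\<in>V. c i * v i mod m) mod m"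
    by (simp add: mod_sum_eq)
  also have "\<dots> = (\<Sum>i\<in>V. c i * w i mod m) mod m" using p by simp
  also have "\<dots> = (\<Sum>i\<in>V. c i * w i) mod m" by (simp add: mod_sum_eq)
  finally have "(\<Sum>i\<in>V. c i * v i) mod m = (\<Sum>i\<in>V. c i * w i) mod m" .
  then show ?thesis using L by (metis mod_add_right_eq)
qed

definition invar :: "int \<Rightarrow> ((nat \<Rightarrow> int) \<Rightarrow> int) list \<Rightarrow> (nat \<Rightarrow> int) set \<Rightarrow> bool" where
  "invar M Ls S \<longleftrightarrow> (\<forall>v w. (\<forall>i. v i mod M = w i mod M) \<longrightarrow> (\<forall>L\<in>set Ls. (L v = 0) = (L w = 0))
      \<longrightarrow> (v \<in> S \<longleftrightarrow> w \<in> S))"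

definition simple :: "(nat \<Rightarrow> int) set \<Rightarrow> bool" where
  "simple S \<longleftrightarrow> (\<exists>M Ls. M > 0 \<and> (\<forall>L\<in>set Ls. aff L) \<and> invar M Ls S)"

lemma mod_dvd_eq: "(a::int) mod M' = b mod M' \<Longrightarrow> M dvd M' \<Longrightarrow> a mod M = b mod M"
  by (metis mod_mod_cancel)

lemma invarD:
  assumes "invar M Ls S" "\<And>i. v i mod M = w i mod M" "\<And>L. L \<in> set Ls \<Longrightarrow> (L v = 0) = (L w = 0)" "v \<in> S"
  shows "w \<in> S"
proof -
  have "\<forall>i. v i mod M = w i mod M" using assms(2) by blast
  moreover have "\<forall>L\<in>set Ls. (L v = 0) = (L w = 0)" using assms(3) by blast
  ultimately show ?thesis using assms(1)[unfolded invar_def, rule_format, of v w] assms(4) by blast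
qed

lemma modh1: "((a::int) - M*t) mod M = a mod M"
proof -
  have "a - M*t = a + (-t)*M" by simp
  then show ?thesis by (simp only: mod_mult_self1)
qed

lemma modh2: "((a::int) + M*t) mod M = a mod M"
  by (metis mod_mult_self1 mult.commute)

lemma simple_ex:
  assumes M: "M > 0" and A: "\<forall>L\<in>set Ls. aff L" and I: "invar M Ls S"
  shows "simple {v. \<exists>a. v(y:=a) \<in> S}"
proof -
  define g where "g L = coef L y" for L
  define R where "R L = (\<lambda>v. L (v(y:=0)))" for L :: "(nat \<Rightarrow> int) \<Rightarrow> int"
  define M' where "M' = M * prod_list (map (\<lambda>L. if g L = 0 then 1 else \<bar>g L\<bar>) Ls)"
  define C where "C Lj Lk = (\<lambda>v. g Lj * R Lk v + (- g Lk) * R Lj v)" for Lj Lk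
  define Ls' where "Ls' = map R Ls @ concat (map (\<lambda>Lj. map (\<lambda>Lk. C Lj Lk) Ls) Ls)"
  have upd: "L (u(y:=x)) = g L * x + R L u" if "L \<in> set Ls" for L u x
    using aff_upd[of L u y x] A that unfolding g_def R_def by auto
  have pos: "prod_list (map (\<lambda>L. if g L = 0 then 1 else \<bar>g L\<bar>) Ls) > 0"
    by (induction Ls) auto
  have M'pos: "M' > 0" using M pos unfolding M'_def by simp
  have MM': "M dvd M'" unfolding M'_def by simp
  have gM: "g L * M dvd M'" if "L \<in> set Ls" "g L \<noteq> 0" for L
  proof -
    have "\<bar>g L\<bar> dvd prod_list (map (\<lambda>L. if g L = 0 then 1 else \<bar>g L\<bar>) Ls)"
      using prod_list_dvd[of "\<bar>g L\<bar>"] that by force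
    then show ?thesis unfolding M'_def by (simp add: mult_dvd_mono mult.commute)
  qed
  have affR: "aff (R L)" if "L \<in> set Ls" for L using aff_rest A that unfolding R_def by auto
  have affC: "aff (C Lj Lk)" if "Lj \<in> set Ls" "Lk \<in> set Ls" for Lj Lk
    unfolding C_def using aff_comb[OF affR[OF that(2)] affR[OF that(1)]] .
  have affLs': "\<forall>L\<in>set Ls'. aff L"
    unfolding Ls'_def using affR affC by auto
  have Rin: "R L \<in> set Ls'" if "L \<in> set Ls" for L using that unfolding Ls'_def by auto
  have Cin: "C Lj Lk \<in> set Ls'" if "Lj \<in> set Ls" "Lk \<in> set Ls" for Lj Lk
    using that unfolding Ls'_def by auto
  have one: "\<exists>b. w(y:=b) \<in> S"
    if vw: "\<forall>i. v i mod M' = w i mod M'" and tr: "\<forall>L\<in>set Ls'. (L v = 0) = (L w = 0)"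
      and va: "v(y:=a) \<in> S" for v w a
  proof -
    have vwM: "v i mod M = w i mod M" for i using vw mod_dvd_eq[OF _ MM'] by blast
    have Rcong: "R L v mod M' = R L w mod M'" if "L \<in> set Ls" for L
      using aff_cong[OF affR[OF that]] vw by blast
    show ?thesis
    proof (cases "\<exists>Lj\<in>set Ls. g Lj \<noteq> 0 \<and> g Lj * a + R Lj v = 0")
      case True
      then obtain Lj where Lj: "Lj \<in> set Ls" "g Lj \<noteq> 0" "g Lj * a + R Lj v = 0" by blast
      have "M' dvd R Lj w - R Lj v" using Rcong[OF Lj(1)] by (metis mod_eq_dvd_iff)
      then have "g Lj * M dvd R Lj w - R Lj v" using gM[OF Lj(1,2)] dvd_trans by blast
      then obtain t where t: "R Lj w - R Lj v = g Lj * M * t" by blast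
      define b where "b = a - M * t"
      have bz: "g Lj * b + R Lj w = 0" using t Lj(3) unfolding b_def by (simp add: algebra_simps)
      have "w(y:=b) \<in> S"
      proof -
        have r: "\<forall>i. (v(y:=a)) i mod M = (w(y:=b)) i mod M"
          using vwM unfolding b_def by (auto simp: modh1 modh2)
        have "(L (v(y:=a)) = 0) = (L (w(y:=b)) = 0)" if L: "L \<in> set Ls" for L
        proof -
          have a1: "g Lj * a = - R Lj v" using Lj(3) by linarith
          have "g Lj * L (v(y:=a)) = g Lj * (g L * a + R L v)" by (simp only: upd[OF L])
          also have "\<dots> = g L * (g Lj * a) + g Lj * R L v" by algebra
          also have "\<dots> = g Lj * R L v + (- g L) * R Lj v" unfolding a1 by algebra
          finally have e1: "g Lj * L (v(y:=a)) = g Lj * R L v + (- g L) * R Lj v" .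
          have b1: "g Lj * b = - R Lj w" using bz by linarith
          have "g Lj * L (w(y:=b)) = g Lj * (g L * b + R L w)" by (simp only: upd[OF L])
          also have "\<dots> = g L * (g Lj * b) + g Lj * R L w" by algebra
          also have "\<dots> = g Lj * R L w + (- g L) * R Lj w" unfolding b1 by algebra
          finally have e2: "g Lj * L (w(y:=b)) = g Lj * R L w + (- g L) * R Lj w" .
          have "(C Lj L v = 0) = (C Lj L w = 0)"
            using tr Cin[OF Lj(1) L] by blast
          then have c: "(g Lj * L (v(y:=a)) = 0) = (g Lj * L (w(y:=b)) = 0)"
            unfolding e1 e2 C_def by simp
          have "(L (v(y:=a)) = 0) = (g Lj * L (v(y:=a)) = 0)" using Lj(2) by simp
          moreover have "(L (w(y:=b)) = 0) = (g Lj * L (w(y:=b)) = 0)" using Lj(2) by simp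
          ultimately show ?thesis using c by simp
        qed
        then show ?thesis using invarD[OF I _ _ va] r by blast
      qed
      then show ?thesis by blast
    next
      case False
      note nroot = False
      define B where "B = sum_list (map (\<lambda>L. \<bar>R L w\<bar>) Ls)"
      define b where "b = a + M * (B + \<bar>a\<bar> + 1)"
      have B0: "B \<ge> 0" unfolding B_def by (induction Ls) auto
      have "M * (B + \<bar>a\<bar> + 1) \<ge> B + \<bar>a\<bar> + 1" using mult_right_mono[of 1 M "B + \<bar>a\<bar> + 1"] M B0 by simp
      then have bB: "b > B" unfolding b_def by linarith
      have nz: "g L * b + R L w \<noteq> 0" if L: "L \<in> set Ls" "g L \<noteq> 0" for L
      proof
        assume z: "g L * b + R L w = 0"
        have "\<bar>R L w\<bar> \<le> B" unfolding B_def
          by (rule member_le_sum_list) (use L in auto)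
        moreover have "\<bar>g L * b\<bar> \<ge> \<bar>b\<bar>"
        proof -
          have "\<bar>g L\<bar> \<ge> 1" using L(2) by linarith
          then have "\<bar>g L\<bar> * \<bar>b\<bar> \<ge> 1 * \<bar>b\<bar>" by (rule mult_right_mono) simp
          then show ?thesis by (simp add: abs_mult)
        qed
        ultimately show False using z bB by linarith
      qed
      have "w(y:=b) \<in> S"
      proof -
        have r: "\<forall>i. (v(y:=a)) i mod M = (w(y:=b)) i mod M"
          using vwM unfolding b_def by (auto simp: modh1 modh2)
        have "(L (v(y:=a)) = 0) = (L (w(y:=b)) = 0)" if L: "L \<in> set Ls" for L
        proof (cases "g L = 0")
          case True
          then show ?thesis using upd[OF L] tr Rin[OF L] by auto
        next
          case False
          then show ?thesis using upd[OF L] nz[OF L False] nroot L False by auto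
        qed
        then show ?thesis using invarD[OF I _ _ va] r by blast
      qed
      then show ?thesis by blast
    qed
  qed
  have "invar M' Ls' {v. \<exists>a. v(y:=a) \<in> S}"
    unfolding invar_def
  proof (intro allI impI)
    fix v w
    assume h1: "\<forall>i. v i mod M' = w i mod M'" and h2: "\<forall>L\<in>set Ls'. (L v = 0) = (L w = 0)"
    have h3: "\<forall>i. w i mod M' = v i mod M'" using h1 by simp
    have h4: "\<forall>L\<in>set Ls'. (L w = 0) = (L v = 0)" using h2 by simp
    show "(v \<in> {v. \<exists>a. v(y:=a) \<in> S}) = (w \<in> {v. \<exists>a. v(y:=a) \<in> S})"
      using one[OF h1 h2] one[OF h3 h4] by blast
  qed
  then show ?thesis unfolding simple_def using M'pos affLs' by blast
qed

lemma simple_neg: assumes "simple S" shows "simple (- S)"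
proof -
  obtain M Ls where "M > 0" "\<forall>L\<in>set Ls. aff L" "invar M Ls S" using assms unfolding simple_def by blast
  moreover have "invar M Ls S \<Longrightarrow> invar M Ls (- S)" unfolding invar_def Compl_iff by presburger
  ultimately show ?thesis unfolding simple_def by blast
qed

lemma simple_int: assumes "simple S" "simple T" shows "simple (S \<inter> T)"
proof -
  obtain M1 Ls1 where 1: "M1 > 0" "\<forall>L\<in>set Ls1. aff L" "invar M1 Ls1 S" using assms(1) unfolding simple_def by blast
  obtain M2 Ls2 where 2: "M2 > 0" "\<forall>L\<in>set Ls2. aff L" "invar M2 Ls2 T" using assms(2) unfolding simple_def by blast
  have "invar (M1*M2) (Ls1 @ Ls2) (S \<inter> T)"
    unfolding invar_def
  proof (intro allI impI)
    fix v w assume h1: "\<forall>i. v i mod (M1*M2) = w i mod (M1*M2)" and h2: "\<forall>L\<in>set (Ls1 @ Ls2). (L v = 0) = (L w = 0)"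
    have a: "v i mod M1 = w i mod M1" for i using h1 mod_dvd_eq[of "v i" "M1*M2" "w i" M1] by simp
    have b: "v i mod M2 = w i mod M2" for i using h1 mod_dvd_eq[of "v i" "M1*M2" "w i" M2] by simp
    have "(v \<in> S) = (w \<in> S)" using 1(3)[unfolded invar_def, rule_format, of v w] a h2 by auto
    moreover have "(v \<in> T) = (w \<in> T)" using 2(3)[unfolded invar_def, rule_format, of v w] b h2 by auto
    ultimately show "(v \<in> S \<inter> T) = (w \<in> S \<inter> T)" by blast
  qed
  moreover have "M1 * M2 > 0" using 1 2 by simp
  moreover have "\<forall>L\<in>set (Ls1 @ Ls2). aff L" using 1 2 by auto
  ultimately show ?thesis unfolding simple_def by blast
qed

lemma simple_lin:
  assumes "aff L" "\<And>v. v \<in> S \<longleftrightarrow> L v = 0"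
  shows "simple S"
proof -
  have "invar 1 [L] S" unfolding invar_def using assms(2) by auto
  then show ?thesis unfolding simple_def using assms(1) by (intro exI[of _ 1] exI[of _ "[L]"]) auto
qed

lemma simple_empty: "simple {}"
  unfolding simple_def invar_def by (intro exI[of _ 1] exI[of _ "[]"]) auto

lemma Zadd_iff: "Zadd r xs \<longleftrightarrow> (length xs = 3 \<and> xs!2 = xs!0 + xs!1)"
proof
  assume "Zadd r xs" then show "length xs = 3 \<and> xs!2 = xs!0 + xs!1" unfolding Zadd_def by auto
next
  assume h: "length xs = 3 \<and> xs!2 = xs!0 + xs!1"
  then obtain a b c where "xs = [a,b,c]"
    by (cases xs rule: list.exhaust; cases "tl xs" rule: list.exhaust; cases "tl (tl xs)" rule: list.exhaust) auto
  then show "Zadd r xs" using h unfolding Zadd_def by auto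
qed

lemma simple_sat: "simple {v. sat (UNIV::int set) Zadd \<phi> v}"
proof (induction \<phi>)
  case (Eq i j)
  show ?case
    by (rule simple_lin[OF aff_comb[OF aff_var aff_var, of 1 i "-1" j]]) auto
next
  case (Rel r "is")
  show ?case
  proof (cases "length is = 3")
    case True
    have a: "aff (\<lambda>v. 1 * (1 * v (is!0) + 1 * v (is!1)) + (-1) * v (is!2))"
      by (rule aff_comb[OF aff_comb[OF aff_var aff_var] aff_var])
    show ?thesis
      by (rule simple_lin[OF a]) (use True in \<open>auto simp: Zadd_iff\<close>)
  next
    case False
    then have "{v. sat (UNIV::int set) Zadd (Rel r is) v} = {}" by (auto simp: Zadd_iff)
    then show ?thesis using simple_empty by simp
  qed
next
  case (Neg \<phi>)
  have "{v. sat (UNIV::int set) Zadd (Neg \<phi>) v} = - {v. sat (UNIV::int set) Zadd \<phi> v}" by auto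
  then show ?case using simple_neg[OF Neg] by simp
next
  case (Conj \<phi> \<psi>)
  have "{v. sat (UNIV::int set) Zadd (Conj \<phi> \<psi>) v} = {v. sat (UNIV::int set) Zadd \<phi> v} \<inter> {v. sat (UNIV::int set) Zadd \<psi> v}" by auto
  then show ?case using simple_int[OF Conj] by simp
next
  case (Ex i \<phi>)
  obtain M Ls where "M > 0" "\<forall>L\<in>set Ls. aff L" "invar M Ls {v. sat (UNIV::int set) Zadd \<phi> v}"
    using Ex unfolding simple_def by blast
  from simple_ex[OF this, of i]
  have "simple {v. \<exists>a. v(i:=a) \<in> {v. sat (UNIV::int set) Zadd \<phi> v}}" .
  moreover have "{v. sat (UNIV::int set) Zadd (Ex i \<phi>) v} = {v. \<exists>a. v(i:=a) \<in> {v. sat (UNIV::int set) Zadd \<phi> v}}" by auto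
  ultimately show ?case by simp
qed

lemma pigeon:
  assumes T: "finite T" and f: "\<And>x. x \<in> D \<Longrightarrow> f x \<in> T" and D: "finite D" "D \<noteq> {}"
    and c: "card T * P \<le> card D"
  shows "\<exists>y. P \<le> card {x\<in>D. f x = y}"
proof (rule ccontr)
  assume "\<not> ?thesis"
  then have lt: "card {x\<in>D. f x = y} < P" for y by (simp add: not_le)
  have "D = (\<Union>y\<in>T. {x\<in>D. f x = y})" using f by auto
  then have "card D \<le> (\<Sum>y\<in>T. card {x\<in>D. f x = y})" using card_UN_le[OF T, of "\<lambda>y. {x\<in>D. f x = y}"] by simp
  also have "\<dots> \<le> card T * (P - 1)"
  proof -
    have "card {x\<in>D. f x = y} \<le> P - 1" for y using lt[of y] by (cases P) auto
    then show ?thesis using sum_bounded_above[of T "\<lambda>y. card {x\<in>D. f x = y}" "P - 1"] by simp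
  qed
  finally have "card D \<le> card T * (P - 1)" .
  moreover have "T \<noteq> {}" using D f by blast
  then have "card T > 0" using T by (simp add: card_gt_0_iff)
  moreover have "P > 0" using lt by (metis not_less0 gr0I)
  ultimately have "card D < card T * P"
    by (metis Suc_pred' diff_less less_one mult_less_cancel1 le_less_trans)
  then show False using c by simp
qed

lemma card_UN2_le:
  assumes "finite A" "\<And>i i'. i \<in> A \<Longrightarrow> i' \<in> A \<Longrightarrow> card (X i i') \<le> d"
  shows "card (\<Union>i\<in>A. \<Union>i'\<in>A. X i i') \<le> card A * card A * d"
proof -
  have "card (\<Union>i\<in>A. \<Union>i'\<in>A. X i i') \<le> (\<Sum>i\<in>A. card (\<Union>i'\<in>A. X i i'))"
    by (rule card_UN_le[OF assms(1)])
  also have "\<dots> \<le> (\<Sum>i\<in>A. card A * d)"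
  proof (rule sum_mono)
    fix i assume i: "i \<in> A"
    have "card (\<Union>i'\<in>A. X i i') \<le> (\<Sum>i'\<in>A. card (X i i'))" by (rule card_UN_le[OF assms(1)])
    also have "\<dots> \<le> card A * d" using sum_bounded_above[of A "\<lambda>i'. card (X i i')" d] assms(2)[OF i] by simp
    finally show "card (\<Union>i'\<in>A. X i i') \<le> card A * d" .
  qed
  also have "\<dots> = card A * card A * d" by simp
  finally show ?thesis .
qed

lemma select:
  fixes f1 :: "nat \<Rightarrow> 'a" and f2 :: "nat \<Rightarrow> 'b"
  assumes T1: "finite T1" and T2: "finite T2"
    and f1: "\<And>i. i < N' \<Longrightarrow> f1 i \<in> T1" and f2: "\<And>j. j < N' \<Longrightarrow> f2 j \<in> T2"
    and B1: "\<And>i i'. i < N' \<Longrightarrow> i' < N' \<Longrightarrow> card {j. j < N' \<and> Bad1 i i' j} \<le> d1"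
    and B2: "\<And>j j'. j < N' \<Longrightarrow> j' < N' \<Longrightarrow> card {i. i < N' \<and> Bad2 j j' i} \<le> d2"
    and s: "s = m + m * m * d2"
    and P: "P = m + s + s * s * d1 + 1"
    and N: "N' = P * (card T1 + card T2 + 1)"
  shows "\<exists>I J. I \<subseteq> {..<N'} \<and> J \<subseteq> {..<N'} \<and> card I = m \<and> card J = m \<and>
     (\<forall>i\<in>I. \<forall>i'\<in>I. f1 i = f1 i') \<and> (\<forall>j\<in>J. \<forall>j'\<in>J. f2 j = f2 j') \<and>
     (\<forall>i\<in>I. \<forall>i'\<in>I. \<forall>j\<in>J. \<not> Bad1 i i' j) \<and> (\<forall>j\<in>J. \<forall>j'\<in>J. \<forall>i\<in>I. \<not> Bad2 j j' i)"
proof -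
  have Npos: "{..<N'} \<noteq> {}" using N P by auto
  have "P * card T1 \<le> P * (card T1 + card T2 + 1)" by (rule mult_le_mono2) simp
  then have c1: "card T1 * P \<le> card {..<N'}" using N by (simp add: mult.commute)
  have "P * card T2 \<le> P * (card T1 + card T2 + 1)" by (rule mult_le_mono2) simp
  then have c2: "card T2 * P \<le> card {..<N'}" using N by (simp add: mult.commute)
  obtain y1 where y1: "P \<le> card {i\<in>{..<N'}. f1 i = y1}"
    using pigeon[OF T1 _ _ Npos c1, of f1] f1 by auto
  obtain y2 where y2: "P \<le> card {j\<in>{..<N'}. f2 j = y2}"
    using pigeon[OF T2 _ _ Npos c2, of f2] f2 by auto
  define R0 where "R0 = {i\<in>{..<N'}. f1 i = y1}"
  define C0 where "C0 = {j\<in>{..<N'}. f2 j = y2}"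
  have "s \<le> card R0" using y1 P unfolding R0_def by simp
  then obtain I0 where I0: "I0 \<subseteq> R0" "card I0 = s" "finite I0" by (rule obtain_subset_with_card_n)
  define BC where "BC = (\<Union>i\<in>I0. \<Union>i'\<in>I0. {j. j < N' \<and> Bad1 i i' j})"
  have I0N: "I0 \<subseteq> {..<N'}" using I0 unfolding R0_def by auto
  have "card BC \<le> card I0 * card I0 * d1"
    unfolding BC_def by (rule card_UN2_le[OF I0(3)]) (use B1 I0N in auto)
  then have cBC: "card BC \<le> s * s * d1" using I0 by simp
  have fBC: "finite BC" unfolding BC_def using I0(3) by auto
  have "card C0 - card BC \<le> card (C0 - BC)" by (rule diff_card_le_card_Diff[OF fBC])
  then have "m \<le> card (C0 - BC)" using y2 cBC P unfolding C0_def by linarith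
  then obtain J where J: "J \<subseteq> C0 - BC" "card J = m" "finite J" by (rule obtain_subset_with_card_n)
  have JN: "J \<subseteq> {..<N'}" using J unfolding C0_def by auto
  define BR where "BR = (\<Union>j\<in>J. \<Union>j'\<in>J. {i. i < N' \<and> Bad2 j j' i})"
  have "card BR \<le> card J * card J * d2"
    unfolding BR_def by (rule card_UN2_le[OF J(3)]) (use B2 JN in auto)
  then have cBR: "card BR \<le> m * m * d2" using J by simp
  have fBR: "finite BR" unfolding BR_def using J(3) by auto
  have "card I0 - card BR \<le> card (I0 - BR)" by (rule diff_card_le_card_Diff[OF fBR])
  then have "m \<le> card (I0 - BR)" using I0 cBR s by linarith
  then obtain I where I: "I \<subseteq> I0 - BR" "card I = m" "finite I" by (rule obtain_subset_with_card_n)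
  show ?thesis
  proof (intro exI conjI)
    show "I \<subseteq> {..<N'}" using I I0N by auto
    show "J \<subseteq> {..<N'}" using JN .
    show "card I = m" "card J = m" using I J by auto
    show "\<forall>i\<in>I. \<forall>i'\<in>I. f1 i = f1 i'" using I I0 unfolding R0_def by auto
    show "\<forall>j\<in>J. \<forall>j'\<in>J. f2 j = f2 j'" using J unfolding C0_def by auto
    show "\<forall>i\<in>I. \<forall>i'\<in>I. \<forall>j\<in>J. \<not> Bad1 i i' j" using I J JN unfolding BC_def by blast
    show "\<forall>j\<in>J. \<forall>j'\<in>J. \<forall>i\<in>I. \<not> Bad2 j j' i" using I J I0N unfolding BR_def by blast
  qed
qed

definition vl :: "nat \<Rightarrow> (nat \<Rightarrow> int) \<Rightarrow> int list \<Rightarrow> nat \<Rightarrow> int" where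
  "vl n ps xs = (\<lambda>i. if i < n then xs!i else ps i)"

definition key :: "int \<Rightarrow> ((nat \<Rightarrow> int) \<Rightarrow> int) list \<Rightarrow> (nat \<Rightarrow> int) \<Rightarrow> nat \<Rightarrow> int list \<Rightarrow> int list \<times> bool list" where
  "key M Ls ps k a = (map (\<lambda>x. x mod M) a, map (\<lambda>L. L (vl (Suc k) ps (0 # a)) = 0) Ls)"

definition keyT :: "int \<Rightarrow> ((nat \<Rightarrow> int) \<Rightarrow> int) list \<Rightarrow> nat \<Rightarrow> (int list \<times> bool list) set" where
  "keyT M Ls k = {xs. set xs \<subseteq> {0..<M} \<and> length xs = k} \<times> {bs. set bs \<subseteq> UNIV \<and> length bs = length Ls}"

lemma keyT_finite: "finite (keyT M Ls k)"
  unfolding keyT_def by (intro finite_cartesian_product finite_lists_length_eq) auto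

lemma key_in: "M > 0 \<Longrightarrow> length a = k \<Longrightarrow> key M Ls ps k a \<in> keyT M Ls k"
  unfolding key_def keyT_def by auto

lemma vl_cons: "vl (Suc k) ps (x # a) = (vl (Suc k) ps (0 # a))(0 := x)"
  unfolding vl_def by (auto simp: fun_eq_iff)

lemma vl_lin:
  assumes "aff L"
  shows "L (vl (Suc k) ps (x # a)) = coef L 0 * x + L (vl (Suc k) ps (0 # a))"
proof -
  have z: "(vl (Suc k) ps (0 # a))(0 := 0) = vl (Suc k) ps (0 # a)"
    unfolding vl_def by (auto simp: fun_eq_iff)
  show ?thesis using aff_upd[OF assms, of "vl (Suc k) ps (0 # a)" 0 x] unfolding vl_cons[of k ps x a] z .
qed

lemma side_setup:
  assumes "definable (UNIV::int set) Zadd (Suc k) Y"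
  obtains M Ls ps S where "M > 0" "\<forall>L\<in>set Ls. aff L" "invar M Ls S"
    "\<And>xs. xs \<in> Y \<longleftrightarrow> length xs = Suc k \<and> vl (Suc k) ps xs \<in> S"
proof -
  obtain \<phi> ps where Y: "Y = {xs. length xs = Suc k \<and> set xs \<subseteq> UNIV \<and>
      sat UNIV Zadd \<phi> (\<lambda>i. if i < Suc k then xs ! i else ps i)}"
    using assms unfolding definable_def by blast
  obtain M Ls where "M > 0" "\<forall>L\<in>set Ls. aff L" "invar M Ls {v. sat (UNIV::int set) Zadd \<phi> v}"
    using simple_sat[of \<phi>] unfolding simple_def by blast
  moreover have "\<And>xs. xs \<in> Y \<longleftrightarrow> length xs = Suc k \<and> vl (Suc k) ps xs \<in> {v. sat (UNIV::int set) Zadd \<phi> v}"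
    unfolding Y vl_def by simp
  ultimately show ?thesis using that by blast
qed

lemma Y_transfer:
  assumes M: "M > 0" and A: "\<forall>L\<in>set Ls. aff L" and I: "invar M Ls S"
    and Y: "\<And>xs. xs \<in> Y \<longleftrightarrow> length xs = Suc k \<and> vl (Suc k) ps xs \<in> S"
    and la: "length a = k" and la': "length a' = k"
    and K: "key M Ls ps k a = key M Ls ps k a'"
    and n1: "\<not> (\<exists>L\<in>set Ls. coef L 0 \<noteq> 0 \<and> L (vl (Suc k) ps (x # a)) = 0)"
    and n2: "\<not> (\<exists>L\<in>set Ls. coef L 0 \<noteq> 0 \<and> L (vl (Suc k) ps (x # a')) = 0)"
    and xa: "x # a \<in> Y"
  shows "x # a' \<in> Y"
proof -
  have K1: "map (\<lambda>x. x mod M) a = map (\<lambda>x. x mod M) a'" using K unfolding key_def by simp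
  have K2: "map (\<lambda>L. L (vl (Suc k) ps (0 # a)) = 0) Ls = map (\<lambda>L. L (vl (Suc k) ps (0 # a')) = 0) Ls"
    using K unfolding key_def by simp
  have r: "vl (Suc k) ps (x # a) i mod M = vl (Suc k) ps (x # a') i mod M" for i
  proof (cases "i < Suc k")
    case True
    show ?thesis
    proof (cases i)
      case 0 then show ?thesis unfolding vl_def by simp
    next
      case (Suc j)
      then have j: "j < k" using True by simp
      have "map (\<lambda>x. x mod M) a ! j = map (\<lambda>x. x mod M) a' ! j" using K1 by simp
      then have "a ! j mod M = a' ! j mod M" using j la la' by simp
      then show ?thesis unfolding vl_def using Suc True by simp
    qed
  next
    case False then show ?thesis unfolding vl_def by simp
  qed
  have t: "(L (vl (Suc k) ps (x # a)) = 0) = (L (vl (Suc k) ps (x # a')) = 0)" if L: "L \<in> set Ls" for L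
  proof (cases "coef L 0 = 0")
    case True
    have "(L (vl (Suc k) ps (0 # a)) = 0) = (L (vl (Suc k) ps (0 # a')) = 0)"
      using K2 L unfolding map_eq_conv by blast
    then show ?thesis using vl_lin[of L k ps x a] vl_lin[of L k ps x a'] A L True by simp
  next
    case False
    then show ?thesis using n1 n2 L by blast
  qed
  have "vl (Suc k) ps (x # a) \<in> S" using xa Y by blast
  moreover have "\<forall>i. vl (Suc k) ps (x # a) i mod M = vl (Suc k) ps (x # a') i mod M" using r by blast
  moreover have "\<forall>L\<in>set Ls. (L (vl (Suc k) ps (x # a)) = 0) = (L (vl (Suc k) ps (x # a')) = 0)" using t by blast
  ultimately have "vl (Suc k) ps (x # a') \<in> S" using I unfolding invar_def by blast
  then show ?thesis using Y la' by simp
qed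

lemma bad_count:
  assumes A: "\<forall>L\<in>set Ls. aff L" and inj: "inj_on cc D" and fin: "finite D"
  shows "card {j. j \<in> D \<and> (\<exists>L\<in>set Ls. coef L 0 \<noteq> 0 \<and> L (vl (Suc k) ps (cc j # a)) = 0)} \<le> length Ls"
proof -
  have one: "card {j. j \<in> D \<and> L (vl (Suc k) ps (cc j # a)) = 0} \<le> 1" if L: "L \<in> set Ls" "coef L 0 \<noteq> 0" for L
  proof -
    have "finite {j. j \<in> D \<and> L (vl (Suc k) ps (cc j # a)) = 0}" using fin by simp
    moreover have "\<forall>j1\<in>{j. j \<in> D \<and> L (vl (Suc k) ps (cc j # a)) = 0}.
        \<forall>j2\<in>{j. j \<in> D \<and> L (vl (Suc k) ps (cc j # a)) = 0}. j1 = j2"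
    proof (intro ballI)
      fix j1 j2 assume j1: "j1 \<in> {j. j \<in> D \<and> L (vl (Suc k) ps (cc j # a)) = 0}"
        and j2: "j2 \<in> {j. j \<in> D \<and> L (vl (Suc k) ps (cc j # a)) = 0}"
      have e1: "coef L 0 * cc j1 + L (vl (Suc k) ps (0 # a)) = 0"
        using j1 vl_lin[of L k ps "cc j1" a] A L(1) by simp
      have e2: "coef L 0 * cc j2 + L (vl (Suc k) ps (0 # a)) = 0"
        using j2 vl_lin[of L k ps "cc j2" a] A L(1) by simp
      have "coef L 0 * cc j1 = coef L 0 * cc j2" using e1 e2 by linarith
      then have "cc j1 = cc j2" using L(2) by simp
      then show "j1 = j2" using inj j1 j2 unfolding inj_on_def by blast
    qed
    ultimately show ?thesis using card_le_Suc0_iff_eq[of "{j. j \<in> D \<and> L (vl (Suc k) ps (cc j # a)) = 0}"] by simp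
  qed
  have "{j. j \<in> D \<and> (\<exists>L\<in>set Ls. coef L 0 \<noteq> 0 \<and> L (vl (Suc k) ps (cc j # a)) = 0)} =
        (\<Union>L\<in>{L\<in>set Ls. coef L 0 \<noteq> 0}. {j. j \<in> D \<and> L (vl (Suc k) ps (cc j # a)) = 0})" (is "?X = ?U") by blast
  then have "card ?X = card ?U" by (rule arg_cong)
  moreover have "card (\<Union>L\<in>{L\<in>set Ls. coef L 0 \<noteq> 0}. {j. j \<in> D \<and> L (vl (Suc k) ps (cc j # a)) = 0})
      \<le> (\<Sum>L\<in>{L\<in>set Ls. coef L 0 \<noteq> 0}. card {j. j \<in> D \<and> L (vl (Suc k) ps (cc j # a)) = 0})"
    by (rule card_UN_le) simp
  moreover have "(\<Sum>L\<in>{L\<in>set Ls. coef L 0 \<noteq> 0}. card {j. j \<in> D \<and> L (vl (Suc k) ps (cc j # a)) = 0})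
      \<le> card {L\<in>set Ls. coef L 0 \<noteq> 0} * 1"
    using sum_bounded_above[of "{L\<in>set Ls. coef L 0 \<noteq> 0}" "\<lambda>L. card {j. j \<in> D \<and> L (vl (Suc k) ps (cc j # a)) = 0}" 1] one
    by simp
  moreover have "card {L\<in>set Ls. coef L 0 \<noteq> 0} \<le> length Ls"
  proof -
    have "card {L\<in>set Ls. coef L 0 \<noteq> 0} \<le> card (set Ls)" by (rule card_mono) auto
    then show ?thesis using card_length[of Ls] by linarith
  qed
  ultimately show ?thesis by linarith
qed

lemma pembed_Zp: "pembed p x \<in> Zp p"
  unfolding pembed_def Zp_def by (auto simp: mod_mod_cancel le_imp_power_dvd)

theorem proposition11p8:
  fixes p :: nat and I :: "'r \<Rightarrow> (nat \<Rightarrow> int) list \<Rightarrow> bool"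
  assumes "prime p" and "odd p"
    and "expands_Zp p I"
    and "dp_minimal (Zp p) I"
    and "\<forall>n S. definable (UNIV :: int set) (induced p I) n S \<longrightarrow>
           (\<exists>X Y. definable (Zp p) I n X \<and> definable (UNIV :: int set) Zadd n Y \<and>
                  S = {xs \<in> Y. map (pembed p) xs \<in> X})"
  shows "dp_minimal (UNIV :: int set) (induced p I)"
proof (rule ccontr)
  assume nd: "\<not> dp_minimal (UNIV :: int set) (induced p I)"
  have "\<exists>k l \<Phi> \<Psi>. definable (UNIV::int set) (induced p I) (Suc k) \<Phi> \<and> definable (UNIV::int set) (induced p I) (Suc l) \<Psi> \<and>
          (\<forall>N::nat. \<exists>a b. (\<forall>i<N. a i \<in> tuples (UNIV::int set) k) \<and> (\<forall>j<N. b j \<in> tuples (UNIV::int set) l) \<and>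
              (\<forall>i<N. \<forall>j<N. \<exists>c\<in>(UNIV::int set).
                  (\<forall>i'<N. (c # a i' \<in> \<Phi>) \<longleftrightarrow> i' = i) \<and>
                  (\<forall>j'<N. (c # b j' \<in> \<Psi>) \<longleftrightarrow> j' = j)))"
    using nd unfolding dp_minimal_def by (rule notnotD)
  then obtain k l \<Phi> \<Psi> where H: "definable (UNIV::int set) (induced p I) (Suc k) \<Phi> \<and> definable (UNIV::int set) (induced p I) (Suc l) \<Psi> \<and>
          (\<forall>N::nat. \<exists>a b. (\<forall>i<N. a i \<in> tuples (UNIV::int set) k) \<and> (\<forall>j<N. b j \<in> tuples (UNIV::int set) l) \<and>
              (\<forall>i<N. \<forall>j<N. \<exists>c\<in>(UNIV::int set).
                  (\<forall>i'<N. (c # a i' \<in> \<Phi>) \<longleftrightarrow> i' = i) \<and>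
                  (\<forall>j'<N. (c # b j' \<in> \<Psi>) \<longleftrightarrow> j' = j)))"
    by (elim exE)
  note d\<Phi> = H[THEN conjunct1]
  note d\<Psi> = H[THEN conjunct2, THEN conjunct1]
  note pat = H[THEN conjunct2, THEN conjunct2, rule_format]
  obtain X1 Y1 where XY1: "definable (Zp p) I (Suc k) X1 \<and> definable (UNIV::int set) Zadd (Suc k) Y1 \<and>
      \<Phi> = {xs \<in> Y1. map (pembed p) xs \<in> X1}"
    using assms(5)[rule_format, OF d\<Phi>] by (elim exE)
  note X1 = XY1[THEN conjunct1]
  note Y1 = XY1[THEN conjunct2, THEN conjunct1]
  note \<Phi> = XY1[THEN conjunct2, THEN conjunct2]
  obtain X2 Y2 where XY2: "definable (Zp p) I (Suc l) X2 \<and> definable (UNIV::int set) Zadd (Suc l) Y2 \<and>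
      \<Psi> = {xs \<in> Y2. map (pembed p) xs \<in> X2}"
    using assms(5)[rule_format, OF d\<Psi>] by (elim exE)
  note X2 = XY2[THEN conjunct1]
  note Y2 = XY2[THEN conjunct2, THEN conjunct1]
  note \<Psi> = XY2[THEN conjunct2, THEN conjunct2]
  obtain M1 Ls1 ps1 S1 where M1: "M1 > 0" and A1: "\<forall>L\<in>set Ls1. aff L" and I1: "invar M1 Ls1 S1"
    and Y1i: "\<And>xs. xs \<in> Y1 \<longleftrightarrow> length xs = Suc k \<and> vl (Suc k) ps1 xs \<in> S1"
    by (rule side_setup[OF Y1]) (rule that)
  obtain M2 Ls2 ps2 S2 where M2: "M2 > 0" and A2: "\<forall>L\<in>set Ls2. aff L" and I2: "invar M2 Ls2 S2"
    and Y2i: "\<And>xs. xs \<in> Y2 \<longleftrightarrow> length xs = Suc l \<and> vl (Suc l) ps2 xs \<in> S2"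
    by (rule side_setup[OF Y2]) (rule that)
  have main: "\<forall>N::nat. \<exists>a b. (\<forall>i<N. a i \<in> tuples (Zp p) k) \<and> (\<forall>j<N. b j \<in> tuples (Zp p) l) \<and>
              (\<forall>i<N. \<forall>j<N. \<exists>c\<in>Zp p.
                  (\<forall>i'<N. (c # a i' \<in> X1) \<longleftrightarrow> i' = i) \<and>
                  (\<forall>j'<N. (c # b j' \<in> X2) \<longleftrightarrow> j' = j))"
  proof
    fix m :: nat
    define d1 where "d1 = length Ls1"
    define d2 where "d2 = length Ls2"
    define s where "s = m + m * m * d2"
    define P where "P = m + s + s * s * d1 + 1"
    define T1 where "T1 = keyT M1 Ls1 k"
    define T2 where "T2 = keyT M2 Ls2 l"
    define N' where "N' = P * (card T1 + card T2 + 1)"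
    obtain a b where a: "\<forall>i<N'. a i \<in> tuples (UNIV::int set) k" and b: "\<forall>j<N'. b j \<in> tuples (UNIV::int set) l"
      and cex: "\<forall>i<N'. \<forall>j<N'. \<exists>c\<in>(UNIV::int set).
                  (\<forall>i'<N'. (c # a i' \<in> \<Phi>) \<longleftrightarrow> i' = i) \<and>
                  (\<forall>j'<N'. (c # b j' \<in> \<Psi>) \<longleftrightarrow> j' = j)"
      using pat[of N'] by (elim exE conjE)
    define cc where "cc i j = (SOME c. (\<forall>i'<N'. (c # a i' \<in> \<Phi>) \<longleftrightarrow> i' = i) \<and>
                  (\<forall>j'<N'. (c # b j' \<in> \<Psi>) \<longleftrightarrow> j' = j))" for i j
    have ccP: "(\<forall>i'<N'. (cc i j # a i' \<in> \<Phi>) \<longleftrightarrow> i' = i) \<and> (\<forall>j'<N'. (cc i j # b j' \<in> \<Psi>) \<longleftrightarrow> j' = j)"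
      if "i < N'" "j < N'" for i j
    proof -
      have "\<exists>c. (\<forall>i'<N'. (c # a i' \<in> \<Phi>) \<longleftrightarrow> i' = i) \<and> (\<forall>j'<N'. (c # b j' \<in> \<Psi>) \<longleftrightarrow> j' = j)"
        using cex that by blast
      then show ?thesis unfolding cc_def by (rule someI_ex)
    qed
    have la: "length (a i) = k" if "i < N'" for i using a that unfolding tuples_def by blast
    have lb: "length (b j) = l" if "j < N'" for j using b that unfolding tuples_def by blast
    have inj1: "inj_on (cc i) {..<N'}" if i: "i < N'" for i
    proof (rule inj_onI)
      fix j1 j2 assume j1: "j1 \<in> {..<N'}" and j2: "j2 \<in> {..<N'}" and e: "cc i j1 = cc i j2"
      have "cc i j1 # b j1 \<in> \<Psi>" using ccP[OF i, of j1] j1 by auto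
      then have "cc i j2 # b j1 \<in> \<Psi>" using e by simp
      then show "j1 = j2" using ccP[OF i, of j2] j1 j2 by auto
    qed
    have inj2: "inj_on (\<lambda>i. cc i j) {..<N'}" if j: "j < N'" for j
    proof (rule inj_onI)
      fix i1 i2 assume i1: "i1 \<in> {..<N'}" and i2: "i2 \<in> {..<N'}" and e: "cc i1 j = cc i2 j"
      have "cc i1 j # a i1 \<in> \<Phi>" using ccP[OF _ j, of i1] i1 by auto
      then have "cc i2 j # a i1 \<in> \<Phi>" using e by simp
      then show "i1 = i2" using ccP[OF _ j, of i2] i1 i2 by auto
    qed
    define Bad1 where "Bad1 i i' j \<longleftrightarrow> (\<exists>L\<in>set Ls1. coef L 0 \<noteq> 0 \<and> L (vl (Suc k) ps1 (cc i j # a i')) = 0)" for i i' j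
    define Bad2 where "Bad2 j j' i \<longleftrightarrow> (\<exists>L\<in>set Ls2. coef L 0 \<noteq> 0 \<and> L (vl (Suc l) ps2 (cc i j # b j')) = 0)" for j j' i
    have B1: "card {j. j < N' \<and> Bad1 i i' j} \<le> d1" if "i < N'" "i' < N'" for i i'
    proof -
      have "{j. j < N' \<and> Bad1 i i' j} = {j. j \<in> {..<N'} \<and> (\<exists>L\<in>set Ls1. coef L 0 \<noteq> 0 \<and> L (vl (Suc k) ps1 (cc i j # a i')) = 0)}"
        unfolding Bad1_def by auto
      then show ?thesis using bad_count[OF A1 inj1[OF that(1)] finite_lessThan, of k ps1 "a i'"] unfolding d1_def by simp
    qed
    have B2: "card {i. i < N' \<and> Bad2 j j' i} \<le> d2" if "j < N'" "j' < N'" for j j'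
    proof -
      have "{i. i < N' \<and> Bad2 j j' i} = {i. i \<in> {..<N'} \<and> (\<exists>L\<in>set Ls2. coef L 0 \<noteq> 0 \<and> L (vl (Suc l) ps2 ((\<lambda>i. cc i j) i # b j')) = 0)}"
        unfolding Bad2_def by auto
      then show ?thesis using bad_count[OF A2 inj2[OF that(1)] finite_lessThan, of l ps2 "b j'"] unfolding d2_def by simp
    qed
    have f1: "key M1 Ls1 ps1 k (a i) \<in> T1" if "i < N'" for i unfolding T1_def using key_in[OF M1 la[OF that]] .
    have f2: "key M2 Ls2 ps2 l (b j) \<in> T2" if "j < N'" for j unfolding T2_def using key_in[OF M2 lb[OF that]] .
    obtain II JJ where II: "II \<subseteq> {..<N'}" and JJ: "JJ \<subseteq> {..<N'}" and cI: "card II = m" and cJ: "card JJ = m"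
      and K1: "\<forall>i\<in>II. \<forall>i'\<in>II. key M1 Ls1 ps1 k (a i) = key M1 Ls1 ps1 k (a i')"
      and K2: "\<forall>j\<in>JJ. \<forall>j'\<in>JJ. key M2 Ls2 ps2 l (b j) = key M2 Ls2 ps2 l (b j')"
      and NB1: "\<forall>i\<in>II. \<forall>i'\<in>II. \<forall>j\<in>JJ. \<not> Bad1 i i' j"
      and NB2: "\<forall>j\<in>JJ. \<forall>j'\<in>JJ. \<forall>i\<in>II. \<not> Bad2 j j' i"
      using select[OF keyT_finite keyT_finite, of N' "\<lambda>i. key M1 Ls1 ps1 k (a i)" M1 Ls1 k
          "\<lambda>j. key M2 Ls2 ps2 l (b j)" M2 Ls2 l Bad1 d1 Bad2 d2 s m P] f1 f2 B1 B2 s_def P_def N'_def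
      unfolding T1_def T2_def by blast
    have fII: "finite II" using II finite_subset by blast
    have fJJ: "finite JJ" using JJ finite_subset by blast
    obtain hI where hI: "bij_betw hI {0..<m} II" using ex_bij_betw_nat_finite[OF fII] cI by auto
    obtain hJ where hJ: "bij_betw hJ {0..<m} JJ" using ex_bij_betw_nat_finite[OF fJJ] cJ by auto
    have hIin: "hI i \<in> II" if "i < m" for i using hI that unfolding bij_betw_def by auto
    have hJin: "hJ j \<in> JJ" if "j < m" for j using hJ that unfolding bij_betw_def by auto
    have hIinj: "hI i = hI i' \<longleftrightarrow> i = i'" if "i < m" "i' < m" for i i'
      using hI that unfolding bij_betw_def inj_on_def by auto
    have hJinj: "hJ j = hJ j' \<longleftrightarrow> j = j'" if "j < m" "j' < m" for j j'
      using hJ that unfolding bij_betw_def inj_on_def by auto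
    show "\<exists>a' b'. (\<forall>i<m. a' i \<in> tuples (Zp p) k) \<and> (\<forall>j<m. b' j \<in> tuples (Zp p) l) \<and>
              (\<forall>i<m. \<forall>j<m. \<exists>c\<in>Zp p.
                  (\<forall>i'<m. (c # a' i' \<in> X1) \<longleftrightarrow> i' = i) \<and>
                  (\<forall>j'<m. (c # b' j' \<in> X2) \<longleftrightarrow> j' = j))"
    proof (intro exI conjI allI impI)
      fix i assume i: "i < m"
      have "hI i < N'" using hIin[OF i] II by auto
      then show "map (pembed p) (a (hI i)) \<in> tuples (Zp p) k"
        using la pembed_Zp unfolding tuples_def by auto
    next
      fix j assume j: "j < m"
      have "hJ j < N'" using hJin[OF j] JJ by auto
      then show "map (pembed p) (b (hJ j)) \<in> tuples (Zp p) l"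
        using lb pembed_Zp unfolding tuples_def by auto
    next
      fix i j assume i: "i < m" and j: "j < m"
      define x where "x = cc (hI i) (hJ j)"
      have iN: "hI i < N'" using hIin[OF i] II by auto
      have jN: "hJ j < N'" using hJin[OF j] JJ by auto
      show "\<exists>c\<in>Zp p. (\<forall>i'<m. (c # map (pembed p) (a (hI i')) \<in> X1) \<longleftrightarrow> i' = i) \<and>
                  (\<forall>j'<m. (c # map (pembed p) (b (hJ j')) \<in> X2) \<longleftrightarrow> j' = j)"
      proof (intro bexI conjI allI impI)
        show "pembed p x \<in> Zp p" by (rule pembed_Zp)
      next
        fix i' assume i': "i' < m"
        have i'N: "hI i' < N'" using hIin[OF i'] II by auto
        have x0: "x # a (hI i) \<in> \<Phi>" using ccP[OF iN jN] iN unfolding x_def by blast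
        then have "x # a (hI i) \<in> Y1" unfolding \<Phi> by blast
        then have y: "x # a (hI i') \<in> Y1"
          using Y_transfer[OF M1 A1 I1 Y1i la[OF iN] la[OF i'N]] K1 hIin[OF i] hIin[OF i']
            NB1 hJin[OF j] unfolding Bad1_def x_def by blast
        have "(x # a (hI i') \<in> \<Phi>) \<longleftrightarrow> hI i' = hI i" using ccP[OF iN jN] i'N unfolding x_def by blast
        then have "(map (pembed p) (x # a (hI i')) \<in> X1) \<longleftrightarrow> i' = i"
          using y hIinj[OF i' i] unfolding \<Phi> by blast
        then show "(pembed p x # map (pembed p) (a (hI i')) \<in> X1) \<longleftrightarrow> i' = i" by simp
      next
        fix j' assume j': "j' < m"
        have j'N: "hJ j' < N'" using hJin[OF j'] JJ by auto
        have x0: "x # b (hJ j) \<in> \<Psi>" using ccP[OF iN jN] jN unfolding x_def by blast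
        then have "x # b (hJ j) \<in> Y2" unfolding \<Psi> by blast
        then have y: "x # b (hJ j') \<in> Y2"
          using Y_transfer[OF M2 A2 I2 Y2i lb[OF jN] lb[OF j'N]] K2 hJin[OF j] hJin[OF j']
            NB2 hIin[OF i] unfolding Bad2_def x_def by blast
        have "(x # b (hJ j') \<in> \<Psi>) \<longleftrightarrow> hJ j' = hJ j" using ccP[OF iN jN] j'N unfolding x_def by blast
        then have "(map (pembed p) (x # b (hJ j')) \<in> X2) \<longleftrightarrow> j' = j"
          using y hJinj[OF j' j] unfolding \<Psi> by blast
        then show "(pembed p x # map (pembed p) (b (hJ j')) \<in> X2) \<longleftrightarrow> j' = j" by simp
      qed
    qed
  qed
  have "\<exists>k l \<Phi> \<Psi>. definable (Zp p) I (Suc k) \<Phi> \<and> definable (Zp p) I (Suc l) \<Psi> \<and>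
          (\<forall>N::nat. \<exists>a b. (\<forall>i<N. a i \<in> tuples (Zp p) k) \<and> (\<forall>j<N. b j \<in> tuples (Zp p) l) \<and>
              (\<forall>i<N. \<forall>j<N. \<exists>c\<in>Zp p.
                  (\<forall>i'<N. (c # a i' \<in> \<Phi>) \<longleftrightarrow> i' = i) \<and>
                  (\<forall>j'<N. (c # b j' \<in> \<Psi>) \<longleftrightarrow> j' = j)))"
    by (rule exI[of _ k], rule exI[of _ l], rule exI[of _ X1], rule exI[of _ X2]) (intro conjI X1 X2 main)
  with assms(4) show False unfolding dp_minimal_def by (rule notE)
qed

end
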